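(* Let $\mathcal X\subseteq\mathbb R^p$ and $\mathcal A=\{a^{(1)},\dots,a^{(d)}\}$ a finite set of real actions. Let $(\boldsymbol X_i,A_i,R_i)$, $i=1,\dots,n$, be random tuples such that: (i) the tuples are independent; (ii) $\boldsymbol X_1,\dots,\boldsymbol X_n$ are i.i.d.; (iii) conditionally on $\boldsymbol X_i$, $A_i$ has distribution $\widetilde\pi_i(\cdot\mid\boldsymbol X_i)$ with $\widetilde\pi_i(a\mid\boldsymbol x)>0$ for all $a,\boldsymbol x$; (iv) the conditional distribution of $R_i$ given $\boldsymbol X_i=\boldsymbol x,A_i=a$ does not depend on $i$; rewards have finite second moments. Let $f_1,\dots,f_q:\mathbb R\to\mathbb R$, $\boldsymbol f(a)=(1,f_1(a),\dots,f_q(a))^\top$, and let $D\in\mathbb R^{d\times(q+1)}$ have $k$-th row $\boldsymbol f(a^{(k)})^\top$, assumed of full column rank. For $1\le i\le n$ let $W_i(\boldsymbol X_i)\in\mathbb R^{d\times d}$ be any symmetric positive-definite matrix (a function of $\boldsymbol X_i$) and $\mathbf K_i(\boldsymbol X_i)=W_i(\boldsymbol X_i)D\,(D^\top W_i(\boldsymbol X_i)D)^{-1}D^\top$. Let $\Sigma_i(\boldsymbol X_i)\in\mathbb R^{d\times d}$ be the conditional covariance matrix, given $\boldsymbol X_i$, of the vector of per-action IPS weights, with entries $$\Sigma_{i,jk}(\boldsymbol X_i)=\operatorname{Cov}\Big(R_i\frac{\mathbf 1_{\{A_i=a^{(j)}\}}}{\widetilde\pi_i(a^{(j)}\mid\boldsymbol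 X_i)},\,R_i\frac{\mathbf 1_{\{A_i=a^{(k)}\}}}{\widetilde\pi_i(a^{(k)}\mid\boldsymbol X_i)}\;\Big|\;\boldsymbol X_i\Big).$$ For a deterministic policy $\pi:\mathcal X\to\mathcal A$ define $$\widehat V_{\rm IPS}(\pi)=\frac1n\sum_{i=1}^nR_i\frac{\mathbf 1_{\{A_i=\pi(\boldsymbol X_i)\}}}{\widetilde\pi_i(A_i\mid\boldsymbol X_i)},\qquad \widehat V_{\rm K}(\pi)=\frac1n\sum_{i=1}^nR_i\frac{\langle\boldsymbol e_{A_i},\mathbf K_i(\boldsymbol X_i)\boldsymbol e_{\pi(\boldsymbol X_i)}\rangle}{\widetilde\pi_i(A_i\mid\boldsymbol X_i)}.$$ Then for every deterministic policy $\pi:\mathcal X\to\mathcal A$, $$\operatorname{Var}\big(\widehat V_{\rm K}(\pi)\mid\boldsymbol X_1,\dots,\boldsymbol X_n\big)\le\max_{1\le i\le n}\kappa\big(W_i(\boldsymbol X_i)\Sigma_i(\boldsymbol X_i)\big)\,\operatorname{Var}\big(\widehat V_{\rm IPS}(\pi)\mid\boldsymbol X_1,\dots,\boldsymbol X_n\big),$$ where for a square matrix $M$, $\kappa(M)\ge1$ denotes the spectral condition number, i.e. the ratio between the largest and the smallest eigenvalue of $M$.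
   Context: $\boldsymbol e_a\in\{0,1\}^d$ is the one-hot encoding of $a\in\mathcal A$ (entry $k$ equals $\mathbf 1_{\{a=a^{(k)}\}}$). Variances and covariances are taken under the data-generating law described (actions drawn from the logging policies $\widetilde\pi_i$). The eigenvalues of $W\Sigma$ with $W$ positive definite and $\Sigma$ positive semidefinite are real and nonnegative; if the smallest is zero, $\kappa$ is $+\infty$. *)

theory Defs
  imports "HOL-Probability.Probability"
begin

text \<open>One-hot encoding e_a of an action (actions are identified with the indices of the finite type 'd).\<close>
definition one_hot :: "'d::finite \<Rightarrow> real^'d" where
  "one_hot a = (\<chi> k. if k = a then 1 else 0)"

definition expect :: "'a measure \<Rightarrow> ('a \<Rightarrow> real) \<Rightarrow> real" where
  "expect M X = (\<integral>\<omega>. X \<omega> \<partial>M)"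

definition covar :: "'a measure \<Rightarrow> ('a \<Rightarrow> real) \<Rightarrow> ('a \<Rightarrow> real) \<Rightarrow> real" where
  "covar M X Y = expect M (\<lambda>\<omega>. (X \<omega> - expect M X) * (Y \<omega> - expect M Y))"

definition var :: "'a measure \<Rightarrow> ('a \<Rightarrow> real) \<Rightarrow> real" where
  "var M X = expect M (\<lambda>\<omega>. (X \<omega> - expect M X)\<^sup>2)"

text \<open>Conditional law of (A_i, R_i) given X_i = x: A_i ~ p = pi_tilde_i(.|x), and
  R_i | (X_i = x, A_i = a) ~ K a.\<close>
definition cond_law :: "'d pmf \<Rightarrow> ('d \<Rightarrow> real measure) \<Rightarrow> ('d \<times> real) measure" where
  "cond_law p K = measure_pmf p \<bind>
      (\<lambda>a. distr (K a) (count_space UNIV \<Otimes>\<^sub>M borel) (\<lambda>r. (a, r)))"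

definition ips_cov :: "'d::finite pmf \<Rightarrow> ('d \<Rightarrow> real measure) \<Rightarrow> real^'d^'d" where
  "ips_cov p K = (\<chi> j k. covar (cond_law p K)
      (\<lambda>(a, r). r * (if a = j then 1 else 0) / pmf p j)
      (\<lambda>(a, r). r * (if a = k then 1 else 0) / pmf p k))"

definition real_eigenvalues :: "real^'n^'n \<Rightarrow> real set" where
  "real_eigenvalues M = {c. \<exists>v. v \<noteq> 0 \<and> M *v v = c *\<^sub>R v}"

text \<open>Spectral condition number: largest over smallest eigenvalue; +infinity if the
  smallest eigenvalue is 0 (used only for matrices W Sigma with real nonnegative spectrum).\<close>
definition cond_number :: "real^'n^'n \<Rightarrow> ereal" where
  "cond_number M = (if Min (real_eigenvalues M) = 0 then \<infinity>
      else ereal (Max (real_eigenvalues M) / Min (real_eigenvalues M)))"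

definition K_mat :: "real^'d^'d \<Rightarrow> real^'c^'d \<Rightarrow> real^'d^'d" where
  "K_mat W D = W ** D ** matrix_inv (transpose D ** W ** D) ** transpose D"

end

theory Submission
  imports Defs
begin

lemma dot_mv_transpose: "(x::real^'n) \<bullet> (A *v y) = (transpose A *v x) \<bullet> y"
  by (simp add: dot_lmul_matrix)

lemma dot_sym_mv: "transpose A = A \<Longrightarrow> (x::real^'n) \<bullet> (A *v y) = (A *v x) \<bullet> y"
  by (metis dot_mv_transpose)

lemma invertible_matrix_inv:
  fixes A :: "real^'n^'n"
  assumes "invertible A"
  shows "A ** matrix_inv A = mat 1" "matrix_inv A ** A = mat 1"
proof -
  have "\<exists>A'. A ** A' = mat 1 \<and> A' ** A = mat 1" using assms invertible_def by blast
  from someI_ex[OF this] show "A ** matrix_inv A = mat 1" "matrix_inv A ** A = mat 1"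
    unfolding matrix_inv_def by auto
qed

lemma pd_invertible:
  fixes W :: "real^'n^'n"
  assumes "\<forall>v. v \<noteq> 0 \<longrightarrow> v \<bullet> (W *v v) > 0"
  shows "invertible W"
proof -
  have "\<forall>x. W *v x = 0 \<longrightarrow> x = 0" using assms by force
  then show ?thesis using matrix_left_invertible_ker invertible_left_inverse by blast
qed

lemma psd_zero:
  fixes N :: "real^'n^'n"
  assumes sym: "transpose N = N" and psd: "\<forall>x. x \<bullet> (N *v x) \<ge> 0" and z: "x0 \<bullet> (N *v x0) = 0"
  shows "N *v x0 = 0"
proof -
  have key: "y \<bullet> (N *v x0) = 0" for y
  proof -
    have h: "0 \<le> 2 * t * (y \<bullet> (N *v x0)) + t^2 * (y \<bullet> (N *v y))" for t :: real
    proof -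
      have "0 \<le> (x0 + t *\<^sub>R y) \<bullet> (N *v (x0 + t *\<^sub>R y))" using psd by blast
      also have "\<dots> = x0 \<bullet> (N *v x0) + t * (x0 \<bullet> (N *v y)) + t * (y \<bullet> (N *v x0)) + t^2 * (y \<bullet> (N *v y))"
        by (simp add: matrix_vector_right_distrib inner_add_left inner_add_right algebra_simps power2_eq_square
             matrix_vector_mult_scaleR)
      also have "x0 \<bullet> (N *v y) = y \<bullet> (N *v x0)" using dot_sym_mv[OF sym] inner_commute by metis
      finally show ?thesis using z by simp
    qed
    define a where "a = y \<bullet> (N *v x0)"
    define b where "b = y \<bullet> (N *v y)"
    have h': "\<And>t. 0 \<le> 2 * t * a + t^2 * b" using h a_def b_def by blast
    show ?thesis
    proof (rule ccontr)
      assume "y \<bullet> (N *v x0) \<noteq> 0"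
      hence an: "a \<noteq> 0" by (simp add: a_def)
      have bnn: "b \<ge> 0" using psd b_def by simp
      define t where "t = - a / (b + 1)"
      have "0 \<le> 2 * t * a + t^2 * b" using h' by blast
      moreover have "2 * t * a + t^2 * b < 0"
      proof -
        have "t * (b+1) = -a" using bnn by (simp add: t_def field_simps)
        hence e: "(b+1)^2 * (2 * t * a + t^2 * b) = - (a^2*(b+2))" by algebra
        have "- (a^2*(b+2)) < 0" using an bnn by (simp add: add_nonneg_pos)
        hence "(b+1)^2 * (2 * t * a + t^2 * b) < 0" using e by simp
        moreover have "(b+1)^2 > 0" using bnn by simp
        ultimately show ?thesis by (simp add: mult_less_0_iff)
      qed
      ultimately show False by simp
    qed
  qed
  show ?thesis using key[of "N *v x0"] by simp
qed

lemma eig_from_kernel: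
  fixes W S :: "real^'n^'n"
  assumes Winv: "invertible W" and k: "(W ** S ** W) *v w0 = \<mu> *\<^sub>R (W *v w0)" and w0: "w0 \<noteq> 0"
  shows "\<mu> \<in> real_eigenvalues (W ** S)"
proof -
  have inj: "inj ((*v) W)" using Winv inj_matrix_vector_mult by blast
  have "W *v (S *v (W *v w0)) = W *v (\<mu> *\<^sub>R w0)"
    using k by (simp add: matrix_vector_mul_assoc matrix_vector_mult_scaleR matrix_mul_assoc)
  hence e: "S *v (W *v w0) = \<mu> *\<^sub>R w0" using inj by (meson injD)
  have "(W ** S) *v (W *v w0) = \<mu> *\<^sub>R (W *v w0)"
    by (simp add: matrix_vector_mul_assoc[symmetric] e matrix_vector_mult_scaleR)
  moreover have "W *v w0 \<noteq> 0" using inj w0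
    by (metis injD matrix_vector_mult_0_right)
  ultimately show ?thesis unfolding real_eigenvalues_def by blast
qed

lemma quad_WSW:
  fixes W S :: "real^'n^'n"
  assumes "transpose W = W"
  shows "(W *v w) \<bullet> (S *v (W *v w)) = w \<bullet> ((W ** S ** W) *v w)"
  by (metis assms dot_sym_mv matrix_vector_mul_assoc)

lemma transpose_WSW:
  fixes W S :: "real^'n^'n"
  assumes "transpose W = W" "transpose S = S"
  shows "transpose (W ** S ** W) = W ** S ** W"
  using assms by (simp add: matrix_transpose_mul matrix_mul_assoc)

lemma quad_scale:
  fixes M :: "real^'n^'n"
  shows "(c *\<^sub>R w) \<bullet> (M *v (c *\<^sub>R w)) = c^2 * (w \<bullet> (M *v w))"
  by (simp add: matrix_vector_mult_scaleR power2_eq_square)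

lemma sphere_ne: "sphere (0::real^'n) 1 \<noteq> {}"
  by simp

lemma cont_quad: "continuous_on T (\<lambda>w. w \<bullet> ((M::real^'n^'n) *v w))"
proof -
  have "continuous_on T ((*v) M)" by (rule matrix_vector_mult_linear_continuous_on)
  then show ?thesis by (intro continuous_intros)
qed

lemma rayleigh_homog:
  fixes M W :: "real^'n^'n"
  assumes Wpd: "\<forall>v. v \<noteq> 0 \<longrightarrow> v \<bullet> (W *v v) > 0"
  defines "q \<equiv> \<lambda>w. (w \<bullet> (M *v w)) / (w \<bullet> (W *v w))"
  assumes "w \<noteq> 0"
  shows "q w = q (w /\<^sub>R norm w)"
proof -
  have "norm w \<noteq> 0" using assms by simp
  then show ?thesis unfolding q_def using quad_scale[of "inverse (norm w)" w M] quad_scale[of "inverse (norm w)" w W]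
    by (simp add: divide_inverse_commute)
qed

lemma transpose_diff': "transpose ((A::real^'n^'n) - B) = transpose A - transpose B"
  by (simp add: transpose_def vec_eq_iff)

lemma quad_scaleR_mat: "(x::real^'n) \<bullet> (\<mu> *\<^sub>R W *v x) = \<mu> * (x \<bullet> (W *v x))"
  by (metis inner_scaleR_right scaleR_matrix_vector_assoc)

lemma rayleigh:
  fixes W S :: "real^'n^'n"
  assumes Wsym: "transpose W = W" and Wpd: "\<forall>v. v \<noteq> 0 \<longrightarrow> v \<bullet> (W *v v) > 0"
    and Ssym: "transpose S = S" and Spsd: "\<forall>x. x \<bullet> (S *v x) \<ge> 0"
  shows "\<exists>\<mu>\<in>real_eigenvalues (W ** S). \<forall>w. \<mu> * (w \<bullet> (W *v w)) \<le> w \<bullet> ((W ** S ** W) *v w)"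
    and "\<exists>\<mu>\<in>real_eigenvalues (W ** S). \<forall>w. w \<bullet> ((W ** S ** W) *v w) \<le> \<mu> * (w \<bullet> (W *v w))"
proof -
  define M where "M = W ** S ** W"
  define q where "q = (\<lambda>w. (w \<bullet> (M *v w)) / (w \<bullet> (W *v w)))"
  have Winv: "invertible W" using pd_invertible Wpd by blast
  have Msym: "transpose M = M" using transpose_WSW[OF Wsym Ssym] M_def by simp
  have cont: "continuous_on (sphere 0 1) q"
    unfolding q_def
  proof (rule continuous_on_divide)
    show "continuous_on (sphere 0 1) (\<lambda>w. w \<bullet> (M *v w))" by (rule cont_quad)
    show "continuous_on (sphere 0 1) (\<lambda>w. w \<bullet> (W *v w))" by (rule cont_quad)
    show "\<forall>x\<in>sphere 0 1. x \<bullet> (W *v x) \<noteq> 0"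
    proof
      fix x :: "real^'n" assume "x \<in> sphere 0 1"
      hence "x \<noteq> 0" by auto
      thus "x \<bullet> (W *v x) \<noteq> 0" using Wpd by force
    qed
  qed
  have hom: "q w = q (w /\<^sub>R norm w)" if "w \<noteq> 0" for w
    unfolding q_def using rayleigh_homog[OF Wpd that, of M] by simp
  have sph: "w /\<^sub>R norm w \<in> sphere 0 1" if "w \<noteq> 0" for w :: "real^'n"
    using that by simp
  have Bpos: "w \<bullet> (W *v w) > 0" if "w \<noteq> 0" for w using Wpd that by blast
  have qeq: "q w * (w \<bullet> (W *v w)) = w \<bullet> (M *v w)" if "w \<noteq> 0" for w
    using Bpos[OF that] unfolding q_def by simp
  { obtain w0 where w0: "w0 \<in> sphere 0 1" and min: "\<forall>y\<in>sphere 0 1. q w0 \<le> q y"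
      using continuous_attains_inf[OF compact_sphere sphere_ne cont] by blast
    define \<mu> where "\<mu> = q w0"
    have w0nz: "w0 \<noteq> 0" using w0 by auto
    have ineq: "\<mu> * (w \<bullet> (W *v w)) \<le> w \<bullet> (M *v w)" for w
    proof (cases "w = 0")
      case True then show ?thesis by simp
    next
      case False
      have "\<mu> \<le> q w" using min sph[OF False] hom[OF False] \<mu>_def by simp
      then have "\<mu> * (w \<bullet> (W *v w)) \<le> q w * (w \<bullet> (W *v w))"
        using Bpos[OF False] by (simp add: mult_right_mono)
      then show ?thesis using qeq[OF False] by simp
    qed
    define N where "N = M - \<mu> *\<^sub>R W"
    have Nq: "x \<bullet> (N *v x) = x \<bullet> (M *v x) - \<mu> * (x \<bullet> (W *v x))" for x
      unfolding N_def by (simp add: matrix_vector_mult_diff_rdistrib inner_diff_right quad_scaleR_mat)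
    have "N *v w0 = 0"
    proof (rule psd_zero)
      show "transpose N = N" unfolding N_def using Msym Wsym by (simp add: transpose_diff' transpose_scalar)
      show "\<forall>x. 0 \<le> x \<bullet> (N *v x)" using ineq Nq by simp
      show "w0 \<bullet> (N *v w0) = 0" using Nq qeq[OF w0nz] \<mu>_def by simp
    qed
    then have "M *v w0 = \<mu> *\<^sub>R (W *v w0)" unfolding N_def
      by (simp add: matrix_vector_mult_diff_rdistrib scaleR_matrix_vector_assoc)
    then have "\<mu> \<in> real_eigenvalues (W ** S)" using eig_from_kernel[OF Winv _ w0nz] M_def by simp
    then show "\<exists>\<mu>\<in>real_eigenvalues (W ** S). \<forall>w. \<mu> * (w \<bullet> (W *v w)) \<le> w \<bullet> ((W ** S ** W) *v w)"
      using ineq M_def by blast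
  }
  { obtain w0 where w0: "w0 \<in> sphere 0 1" and max: "\<forall>y\<in>sphere 0 1. q y \<le> q w0"
      using continuous_attains_sup[OF compact_sphere sphere_ne cont] by blast
    define \<mu> where "\<mu> = q w0"
    have w0nz: "w0 \<noteq> 0" using w0 by auto
    have ineq: "w \<bullet> (M *v w) \<le> \<mu> * (w \<bullet> (W *v w))" for w
    proof (cases "w = 0")
      case True then show ?thesis by simp
    next
      case False
      have "q w \<le> \<mu>" using max sph[OF False] hom[OF False] \<mu>_def by simp
      then have "q w * (w \<bullet> (W *v w)) \<le> \<mu> * (w \<bullet> (W *v w))"
        using Bpos[OF False] by (simp add: mult_right_mono)
      then show ?thesis using qeq[OF False] by simp
    qed
    define N where "N = \<mu> *\<^sub>R W - M"
    have Nq: "x \<bullet> (N *v x) = \<mu> * (x \<bullet> (W *v x)) - x \<bullet> (M *v x)" for x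
      unfolding N_def by (simp add: matrix_vector_mult_diff_rdistrib inner_diff_right quad_scaleR_mat)
    have "N *v w0 = 0"
    proof (rule psd_zero)
      show "transpose N = N" unfolding N_def using Msym Wsym by (simp add: transpose_diff' transpose_scalar)
      show "\<forall>x. 0 \<le> x \<bullet> (N *v x)" using ineq Nq by simp
      show "w0 \<bullet> (N *v w0) = 0" using Nq qeq[OF w0nz] \<mu>_def by simp
    qed
    then have "M *v w0 = \<mu> *\<^sub>R (W *v w0)" unfolding N_def
      by (simp add: matrix_vector_mult_diff_rdistrib scaleR_matrix_vector_assoc)
    then have "\<mu> \<in> real_eigenvalues (W ** S)" using eig_from_kernel[OF Winv _ w0nz] M_def by simp
    then show "\<exists>\<mu>\<in>real_eigenvalues (W ** S). \<forall>w. w \<bullet> ((W ** S ** W) *v w) \<le> \<mu> * (w \<bullet> (W *v w))"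
      using ineq M_def by blast
  }
qed

lemma mv_sum: "(M::real^'n^'m) *v (\<Sum>c\<in>S. f c) = (\<Sum>c\<in>S. M *v f c)"
  by (induction S rule: infinite_finite_induct) (auto simp: matrix_vector_right_distrib)

lemma eig_indep:
  fixes M :: "real^'n^'n"
  assumes v: "\<forall>c\<in>E. v c \<noteq> 0 \<and> M *v v c = c *\<^sub>R v c"
  assumes "finite S" "S \<subseteq> E"
  shows "\<forall>a. (\<Sum>c\<in>S. a c *\<^sub>R v c) = 0 \<longrightarrow> (\<forall>c\<in>S. a c = 0)"
  using assms(2,3)
proof (induction S rule: finite_induct)
  case empty then show ?case by simp
next
  case (insert l S)
  show ?case
  proof (intro allI impI)
    fix a assume s0: "(\<Sum>c\<in>insert l S. a c *\<^sub>R v c) = 0"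
    have s1: "a l *\<^sub>R v l + (\<Sum>c\<in>S. a c *\<^sub>R v c) = 0" using s0 insert by simp
    have "M *v (a l *\<^sub>R v l + (\<Sum>c\<in>S. a c *\<^sub>R v c)) = 0" using s1 by simp
    hence s2: "(a l * l) *\<^sub>R v l + (\<Sum>c\<in>S. (a c * c) *\<^sub>R v c) = 0"
      using v insert.prems by (simp add: matrix_vector_right_distrib matrix_vector_mult_scaleR
          mv_sum subset_iff)
    have "(\<Sum>c\<in>S. (a c * (c - l)) *\<^sub>R v c) = (a l * l) *\<^sub>R v l + (\<Sum>c\<in>S. (a c * c) *\<^sub>R v c) - l *\<^sub>R (a l *\<^sub>R v l + (\<Sum>c\<in>S. a c *\<^sub>R v c))"
      by (simp add: algebra_simps scaleR_sum_right sum_subtractf)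
    also have "\<dots> = 0" using s1 s2 by simp
    finally have "\<forall>c\<in>S. a c * (c - l) = 0" using insert.IH[rule_format, of "\<lambda>c. a c * (c - l)"] insert.prems by blast
    hence az: "\<forall>c\<in>S. a c = 0" using insert.hyps by auto
    hence "a l *\<^sub>R v l = 0" using s1 by simp
    hence "a l = 0" using v insert.prems by auto
    thus "\<forall>c\<in>insert l S. a c = 0" using az by simp
  qed
qed

lemma finite_eigenvalues:
  fixes M :: "real^'n^'n"
  shows "finite (real_eigenvalues M)"
proof -
  define E where "E = real_eigenvalues M"
  define v where "v = (\<lambda>c. SOME x. x \<noteq> 0 \<and> M *v x = c *\<^sub>R x)"
  have v: "\<forall>c\<in>E. v c \<noteq> 0 \<and> M *v v c = c *\<^sub>R v c"
  proof
    fix c assume "c \<in> E"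
    hence "\<exists>x. x \<noteq> 0 \<and> M *v x = c *\<^sub>R x" unfolding E_def real_eigenvalues_def by blast
    from someI_ex[OF this] show "v c \<noteq> 0 \<and> M *v v c = c *\<^sub>R v c" unfolding v_def .
  qed
  have "card S \<le> CARD('n)" if S: "S \<subseteq> E" "finite S" for S
  proof -
    have inj: "inj_on v S"
    proof (rule inj_onI)
      fix c d assume cd: "c \<in> S" "d \<in> S" "v c = v d"
      hence "c *\<^sub>R v c = d *\<^sub>R v c" using v S by (metis subsetD)
      thus "c = d" using v S cd by (metis scaleR_cancel_right subsetD)
    qed
    have "independent (v ` S)"
    proof (rule independent_if_scalars_zero)
      show "finite (v ` S)" using S by simp
      fix f x assume f: "(\<Sum>x\<in>v ` S. f x *\<^sub>R x) = 0" and x: "x \<in> v ` S"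
      have "(\<Sum>c\<in>S. f (v c) *\<^sub>R v c) = 0" using f inj by (simp add: sum.reindex)
      hence "\<forall>c\<in>S. f (v c) = 0" using eig_indep[OF v S(2) S(1), rule_format, of "\<lambda>c. f (v c)"] by blast
      thus "f x = 0" using x by blast
    qed
    hence "card (v ` S) \<le> DIM(real^'n)" using independent_bound by blast
    thus ?thesis using inj by (simp add: card_image)
  qed
  then show ?thesis unfolding E_def[symmetric] using finite_if_finite_subsets_card_bdd by blast
qed

lemma eig_nonneg:
  fixes W S :: "real^'n^'n"
  assumes Wsym: "transpose W = W" and Wpd: "\<forall>v. v \<noteq> 0 \<longrightarrow> v \<bullet> (W *v v) > 0"
    and Spsd: "\<forall>x. x \<bullet> (S *v x) \<ge> 0"
    and c: "c \<in> real_eigenvalues (W ** S)"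
  shows "c \<ge> 0"
proof -
  obtain v where v: "v \<noteq> 0" "(W ** S) *v v = c *\<^sub>R v" using c unfolding real_eigenvalues_def by blast
  have Winv: "invertible W" using pd_invertible Wpd by blast
  have "surj ((*v) W)" using Winv invertible_eq_bij bij_is_surj by blast
  then obtain w where w: "v = W *v w" by (metis surjD)
  have wnz: "w \<noteq> 0" using v w by auto
  have inj: "inj ((*v) W)" using Winv inj_matrix_vector_mult by blast
  have "W *v (S *v (W *v w)) = W *v (c *\<^sub>R w)"
    using v w by (simp add: matrix_vector_mul_assoc matrix_vector_mult_scaleR matrix_mul_assoc)
  hence e: "S *v (W *v w) = c *\<^sub>R w" using inj by (meson injD)
  have "0 \<le> (W *v w) \<bullet> (S *v (W *v w))" using Spsd by blast
  also have "\<dots> = c * ((W *v w) \<bullet> w)" using e by simp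
  also have "(W *v w) \<bullet> w = w \<bullet> (W *v w)" by (simp add: inner_commute)
  finally have "0 \<le> c * (w \<bullet> (W *v w))" .
  moreover have "w \<bullet> (W *v w) > 0" using Wpd wnz by blast
  ultimately show ?thesis by (simp add: zero_le_mult_iff)
qed

lemma dot_vmul: "(x::real^'c) \<bullet> (u v* (D::real^'c^'d)) = (D *v x) \<bullet> u"
  by (metis dot_mv_transpose transpose_matrix_vector transpose_transpose)

lemma la_main:
  fixes W S :: "real^'d^'d" and D :: "real^'c^'d"
  assumes Wsym: "transpose W = W" and Wpd: "\<forall>v. v \<noteq> 0 \<longrightarrow> v \<bullet> (W *v v) > 0"
    and Ssym: "transpose S = S" and Spsd: "\<forall>x. x \<bullet> (S *v x) \<ge> 0"
    and Drank: "rank D = CARD('c)" and fin: "cond_number (W ** S) \<noteq> \<infinity>"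
  shows "(K_mat W D *v e) \<bullet> (S *v (K_mat W D *v e)) \<le> real_of_ereal (cond_number (W ** S)) * (e \<bullet> (S *v e))"
proof -
  define E where "E = real_eigenvalues (W ** S)"
  define A where "A = (\<lambda>w. w \<bullet> ((W ** S ** W) *v w))"
  define B where "B = (\<lambda>w::real^'d. w \<bullet> (W *v w))"
  have Bnn: "B w \<ge> 0" for w unfolding B_def using Wpd by (cases "w = 0") (auto intro: less_imp_le)
  have finE: "finite E" unfolding E_def by (rule finite_eigenvalues)
  obtain \<mu>1 where m1: "\<mu>1 \<in> E" "\<forall>w. \<mu>1 * B w \<le> A w"
    using rayleigh(1)[OF Wsym Wpd Ssym Spsd] unfolding E_def A_def B_def by blast
  obtain \<mu>2 where m2: "\<mu>2 \<in> E" "\<forall>w. A w \<le> \<mu>2 * B w"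
    using rayleigh(2)[OF Wsym Wpd Ssym Spsd] unfolding E_def A_def B_def by blast
  define m where "m = Min E"
  define M where "M = Max E"
  have Ene: "E \<noteq> {}" using m1 by blast
  have mE: "m \<in> E" unfolding m_def using finE Ene by simp
  have m0: "m \<ge> 0" using eig_nonneg[OF Wsym Wpd Spsd] mE unfolding E_def by blast
  have mnz: "m \<noteq> 0" using fin unfolding cond_number_def m_def E_def by auto
  have mpos: "m > 0" using m0 mnz by simp
  have cn: "cond_number (W ** S) = ereal (M / m)" using mnz unfolding cond_number_def m_def M_def E_def by simp
  have mle: "m \<le> \<mu>1" unfolding m_def using finE m1 by simp
  have Mge: "\<mu>2 \<le> M" unfolding M_def using finE m2 by simp
  have Mpos: "M > 0" using mle Mge m1 m2 mpos
    by (metis M_def Max_ge finE less_le_trans mE)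
  have lowA: "m * B w \<le> A w" for w using m1 mle Bnn[of w] by (meson mult_right_mono order_trans)
  have upA: "A w \<le> M * B w" for w using m2 Mge Bnn[of w] by (meson mult_right_mono order_trans)
  define G where "G = transpose D ** W ** D"
  have Dinj: "inj ((*v) D)" using Drank full_rank_injective by blast
  have Gpd: "\<forall>x. x \<noteq> 0 \<longrightarrow> x \<bullet> (G *v x) > 0"
  proof (intro allI impI)
    fix x :: "real^'c" assume "x \<noteq> 0"
    hence "D *v x \<noteq> 0" using Dinj by (metis injD matrix_vector_mult_0_right)
    hence "(D *v x) \<bullet> (W *v (D *v x)) > 0" using Wpd by blast
    also have "(D *v x) \<bullet> (W *v (D *v x)) = x \<bullet> (G *v x)"
      unfolding G_def by (simp add: dot_vmul matrix_vector_mul_assoc[symmetric] matrix_mul_assoc)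
    finally show "x \<bullet> (G *v x) > 0" .
  qed
  have Ginv: "invertible G" using pd_invertible[OF Gpd] .
  define Gi where "Gi = matrix_inv G"
  have GGi: "G ** Gi = mat 1" unfolding Gi_def using invertible_matrix_inv[OF Ginv] by simp
  have Winv: "invertible W" using pd_invertible[OF Wpd] .
  define y where "y = Gi *v (transpose D *v e)"
  define z where "z = D *v y"
  define w where "w = matrix_inv W *v e"
  have Ww: "W *v w = e" unfolding w_def using invertible_matrix_inv(1)[OF Winv]
    by (simp add: matrix_vector_mul_assoc)
  have Kez: "K_mat W D *v e = W *v z"
    unfolding K_mat_def z_def y_def Gi_def G_def by (simp only: matrix_vector_mul_assoc matrix_mul_assoc)
  have DWz: "transpose D *v (W *v z) = transpose D *v e"
  proof -
    have "transpose D *v (W *v z) = G *v y" unfolding z_def G_def by (simp only: matrix_vector_mul_assoc matrix_mul_assoc)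
    also have "\<dots> = transpose D *v e" unfolding y_def by (simp add: matrix_vector_mul_assoc GGi)
    finally show ?thesis .
  qed
  have Bz: "B z = z \<bullet> (W *v w)"
  proof -
    have "B z = y \<bullet> (transpose D *v (W *v z))" unfolding B_def z_def by (simp add: dot_vmul)
    also have "\<dots> = y \<bullet> (transpose D *v e)" using DWz by simp
    also have "\<dots> = z \<bullet> e" unfolding z_def by (simp add: dot_vmul)
    finally show ?thesis using Ww by simp
  qed
  have BzBw: "B z \<le> B w"
  proof -
    have "0 \<le> B (z - w)" by (rule Bnn)
    also have "B (z - w) = B z - z \<bullet> (W *v w) - w \<bullet> (W *v z) + B w"
      unfolding B_def by (simp add: matrix_vector_mult_diff_distrib inner_diff_left inner_diff_right)
    also have "w \<bullet> (W *v z) = z \<bullet> (W *v w)" using dot_sym_mv[OF Wsym, of w z] by (simp add: inner_commute)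
    finally show ?thesis using Bz by simp
  qed
  have lhs: "(K_mat W D *v e) \<bullet> (S *v (K_mat W D *v e)) = A z"
    unfolding Kez A_def using quad_WSW[OF Wsym] by simp
  have rhs: "e \<bullet> (S *v e) = A w" unfolding A_def using quad_WSW[OF Wsym, where S=S and w=w] Ww by simp
  have "A z \<le> M * B z" by (rule upA)
  also have "\<dots> \<le> M * B w" using BzBw Mpos by simp
  also have "\<dots> = (M / m) * (m * B w)" using mpos by simp
  also have "\<dots> \<le> (M / m) * A w"
    using lowA[of w] Mpos mpos by (intro mult_left_mono) auto
  finally show ?thesis using lhs rhs cn by simp
qed

lemma pair_meas:
  assumes "sets M = sets (borel::real measure)"
  shows "(\<lambda>r. (a, r)) \<in> measurable M (count_space UNIV \<Otimes>\<^sub>M borel)"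
proof -
  have "(\<lambda>r::real. (a, r)) \<in> measurable borel (count_space UNIV \<Otimes>\<^sub>M borel)" by (rule measurable_Pair[OF measurable_const measurable_ident_sets]) simp_all
  then show ?thesis unfolding measurable_cong_sets[OF assms refl] .
qed

lemma kernel_meas:
  fixes K :: "'d \<Rightarrow> real measure"
  assumes K: "\<forall>a. prob_space (K a) \<and> sets (K a) = sets borel"
  shows "(\<lambda>a. distr (K a) (count_space UNIV \<Otimes>\<^sub>M borel) (\<lambda>r. (a, r))) \<in> measurable (measure_pmf p) (subprob_algebra (count_space UNIV \<Otimes>\<^sub>M borel))"
proof -
  have "distr (K a) (count_space UNIV \<Otimes>\<^sub>M borel) (\<lambda>r. (a, r)) \<in> space (subprob_algebra (count_space UNIV \<Otimes>\<^sub>M borel))" for a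
  proof -
    interpret prob_space "K a" using K by blast
    have m: "(\<lambda>r. (a, r)) \<in> measurable (K a) (count_space UNIV \<Otimes>\<^sub>M borel)"
      using K by (intro pair_meas) simp
    have "prob_space (distr (K a) (count_space UNIV \<Otimes>\<^sub>M borel) (\<lambda>r. (a, r)))"
      by (rule prob_space_distr[OF m])
    then show ?thesis by (simp add: space_subprob_algebra prob_space_imp_subprob_space)
  qed
  then show ?thesis unfolding measurable_pmf_measure1 by blast
qed

lemma nn_integral_cond_law:
  fixes K :: "'d::finite \<Rightarrow> real measure"
  assumes K: "\<forall>a. prob_space (K a) \<and> sets (K a) = sets borel"
    and h: "h \<in> borel_measurable (count_space UNIV \<Otimes>\<^sub>M borel)"
  shows "(\<integral>\<^sup>+x. h x \<partial>cond_law p K) = (\<Sum>a\<in>UNIV. ennreal (pmf p a) * (\<integral>\<^sup>+r. h (a, r) \<partial>K a))"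
proof -
  have "(\<integral>\<^sup>+x. h x \<partial>cond_law p K) = (\<integral>\<^sup>+a. (\<integral>\<^sup>+x. h x \<partial>distr (K a) (count_space UNIV \<Otimes>\<^sub>M borel) (\<lambda>r. (a, r))) \<partial>measure_pmf p)"
    unfolding cond_law_def by (rule nn_integral_bind[OF h kernel_meas[OF K]])
  also have "\<dots> = (\<integral>\<^sup>+a. (\<integral>\<^sup>+r. h (a, r) \<partial>K a) \<partial>measure_pmf p)"
  proof (rule nn_integral_cong)
    fix a
    have m: "(\<lambda>r. (a, r)) \<in> measurable (K a) (count_space UNIV \<Otimes>\<^sub>M borel)"
      using K by (intro pair_meas) simp
    show "(\<integral>\<^sup>+x. h x \<partial>distr (K a) (count_space UNIV \<Otimes>\<^sub>M borel) (\<lambda>r. (a, r))) = (\<integral>\<^sup>+r. h (a, r) \<partial>K a)"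
      using h by (simp add: nn_integral_distr[OF m])
  qed
  also have "\<dots> = (\<Sum>a\<in>UNIV. ennreal (pmf p a) * (\<integral>\<^sup>+r. h (a, r) \<partial>K a))"
    by (simp add: nn_integral_measure_pmf nn_integral_count_space_finite)
  finally show ?thesis .
qed

lemma cond_law_sets:
  fixes K :: "'d::finite \<Rightarrow> real measure"
  assumes K: "\<forall>a. prob_space (K a) \<and> sets (K a) = sets borel"
  shows "sets (cond_law p K) = sets (count_space UNIV \<Otimes>\<^sub>M borel)"
  unfolding cond_law_def
  by (rule sets_bind) (auto simp: set_pmf_not_empty)

lemma cond_law_prob:
  fixes K :: "'d::finite \<Rightarrow> real measure"
  assumes K: "\<forall>a. prob_space (K a) \<and> sets (K a) = sets borel"
  shows "prob_space (cond_law p K)"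
proof
  have sp: "space (cond_law p K) = space (count_space UNIV \<Otimes>\<^sub>M (borel::real measure))"
    using cond_law_sets[OF K] by (rule sets_eq_imp_space_eq)
  have "emeasure (cond_law p K) (space (cond_law p K)) = (\<integral>\<^sup>+x. 1 \<partial>cond_law p K)"
    by simp
  also have "\<dots> = (\<Sum>a\<in>UNIV. ennreal (pmf p a) * (\<integral>\<^sup>+r. 1 \<partial>K a))"
    by (rule nn_integral_cond_law[OF K]) simp
  also have "\<dots> = (\<Sum>a\<in>UNIV. ennreal (pmf p a))"
  proof (rule sum.cong)
    fix a
    interpret prob_space "K a" using K by blast
    show "ennreal (pmf p a) * (\<integral>\<^sup>+r. 1 \<partial>K a) = ennreal (pmf p a)" by (simp add: emeasure_space_1)
  qed simp
  also have "\<dots> = ennreal (\<Sum>a\<in>UNIV. pmf p a)" using sum_ennreal[of UNIV "pmf p"] pmf_nonneg by metis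
  also have "(\<Sum>a\<in>UNIV. pmf p a) = 1" using sum_pmf_eq_1[of UNIV p] by simp
  finally show "emeasure (cond_law p K) (space (cond_law p K)) = 1" by simp
qed

lemma meas_cond_law:
  fixes K :: "'d::finite \<Rightarrow> real measure"
  assumes K: "\<forall>a. prob_space (K a) \<and> sets (K a) = sets borel"
    and h: "h \<in> borel_measurable (count_space UNIV \<Otimes>\<^sub>M borel)"
  shows "h \<in> borel_measurable (cond_law p K)"
  unfolding measurable_cong_sets[OF cond_law_sets[OF K, of p] refl] using h .

lemma meas_section:
  fixes K :: "'d::finite \<Rightarrow> real measure"
  assumes K: "\<forall>a. prob_space (K a) \<and> sets (K a) = sets borel"
    and h: "h \<in> borel_measurable (count_space UNIV \<Otimes>\<^sub>M borel)"
  shows "(\<lambda>r. h (a, r)) \<in> borel_measurable (K a)"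
proof -
  have "(\<lambda>r. (a, r)) \<in> measurable (K a) (count_space UNIV \<Otimes>\<^sub>M borel)"
    using K by (intro pair_meas) simp
  from measurable_comp[OF this h] show ?thesis by (simp add: comp_def)
qed

lemma integrable_cond_law:
  fixes K :: "'d::finite \<Rightarrow> real measure" and h :: "'d \<times> real \<Rightarrow> real"
  assumes K: "\<forall>a. prob_space (K a) \<and> sets (K a) = sets borel"
    and h: "h \<in> borel_measurable (count_space UNIV \<Otimes>\<^sub>M borel)"
    and hi: "\<forall>a. integrable (K a) (\<lambda>r. h (a, r))"
  shows "integrable (cond_law p K) h"
proof (subst integrable_iff_bounded, intro conjI)
  show "h \<in> borel_measurable (cond_law p K)" by (rule meas_cond_law[OF K h])
  have hn: "(\<lambda>x. ennreal (norm (h x))) \<in> borel_measurable (count_space UNIV \<Otimes>\<^sub>M borel)"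
    using h by measurable
  have "(\<integral>\<^sup>+x. ennreal (norm (h x)) \<partial>cond_law p K) = (\<Sum>a\<in>UNIV. ennreal (pmf p a) * (\<integral>\<^sup>+r. ennreal (norm (h (a, r))) \<partial>K a))"
    by (rule nn_integral_cond_law[OF K hn])
  also have "\<dots> < \<infinity>"
  proof -
    have "(\<integral>\<^sup>+r. ennreal (norm (h (a, r))) \<partial>K a) < \<infinity>" for a
      using hi[rule_format, of a] unfolding integrable_iff_bounded by simp
    then show ?thesis by (simp add: ennreal_mult_less_top less_top[symmetric] ennreal_mult_eq_top_iff)
  qed
  finally show "(\<integral>\<^sup>+x. ennreal (norm (h x)) \<partial>cond_law p K) < \<infinity>" .
qed

lemma integral_cond_law_nonneg:
  fixes K :: "'d::finite \<Rightarrow> real measure" and h :: "'d \<times> real \<Rightarrow> real"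
  assumes K: "\<forall>a. prob_space (K a) \<and> sets (K a) = sets borel"
    and h: "h \<in> borel_measurable (count_space UNIV \<Otimes>\<^sub>M borel)"
    and hi: "\<forall>a. integrable (K a) (\<lambda>r. h (a, r))"
    and nn: "\<forall>x. h x \<ge> 0"
  shows "(\<integral>x. h x \<partial>cond_law p K) = (\<Sum>a\<in>UNIV. pmf p a * (\<integral>r. h (a, r) \<partial>K a))"
proof -
  have I: "integrable (cond_law p K) h" by (rule integrable_cond_law[OF K h hi])
  have "ennreal (\<integral>x. h x \<partial>cond_law p K) = (\<integral>\<^sup>+x. ennreal (h x) \<partial>cond_law p K)"
    using nn_integral_eq_integral[OF I] nn by simp
  also have "\<dots> = (\<Sum>a\<in>UNIV. ennreal (pmf p a) * (\<integral>\<^sup>+r. ennreal (h (a, r)) \<partial>K a))"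
    using h by (intro nn_integral_cond_law[OF K]) measurable
  also have "\<dots> = (\<Sum>a\<in>UNIV. ennreal (pmf p a * (\<integral>r. h (a, r) \<partial>K a)))"
  proof (rule sum.cong[OF refl])
    fix a
    have eq: "(\<integral>\<^sup>+r. ennreal (h (a, r)) \<partial>K a) = ennreal (\<integral>r. h (a, r) \<partial>K a)"
      using nn_integral_eq_integral[of "K a" "\<lambda>r. h (a, r)"] hi nn by simp
    have i0: "0 \<le> (\<integral>r. h (a, r) \<partial>K a)" using nn by (simp add: integral_nonneg)
    show "ennreal (pmf p a) * (\<integral>\<^sup>+r. ennreal (h (a, r)) \<partial>K a) = ennreal (pmf p a * (\<integral>r. h (a, r) \<partial>K a))"
      using ennreal_mult[OF pmf_nonneg i0, of p a] eq by simp
  qed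
  also have "\<dots> = ennreal (\<Sum>a\<in>UNIV. pmf p a * (\<integral>r. h (a, r) \<partial>K a))"
    by (rule sum_ennreal) (simp add: nn)
  finally have e: "ennreal (\<integral>x. h x \<partial>cond_law p K) = ennreal (\<Sum>a\<in>UNIV. pmf p a * (\<integral>r. h (a, r) \<partial>K a))" .
  have "0 \<le> (\<integral>x. h x \<partial>cond_law p K)" using nn by (intro Bochner_Integration.integral_nonneg) auto
  moreover have "0 \<le> (\<Sum>a\<in>UNIV. pmf p a * (\<integral>r. h (a, r) \<partial>K a))"
    using nn by (intro sum_nonneg mult_nonneg_nonneg) simp_all
  ultimately show ?thesis using e by simp
qed

lemma integral_cond_law:
  fixes K :: "'d::finite \<Rightarrow> real measure" and h :: "'d \<times> real \<Rightarrow> real"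
  assumes K: "\<forall>a. prob_space (K a) \<and> sets (K a) = sets borel"
    and h: "h \<in> borel_measurable (count_space UNIV \<Otimes>\<^sub>M borel)"
    and hi: "\<forall>a. integrable (K a) (\<lambda>r. h (a, r))"
  shows "(\<integral>x. h x \<partial>cond_law p K) = (\<Sum>a\<in>UNIV. pmf p a * (\<integral>r. h (a, r) \<partial>K a))"
proof -
  define hp where "hp = (\<lambda>x. max (h x) 0)"
  define hm where "hm = (\<lambda>x. max (- h x) 0)"
  have hpm: "h x = hp x - hm x" for x unfolding hp_def hm_def by simp
  have hpM: "hp \<in> borel_measurable (count_space UNIV \<Otimes>\<^sub>M borel)" unfolding hp_def using h by measurable
  have hmM: "hm \<in> borel_measurable (count_space UNIV \<Otimes>\<^sub>M borel)" unfolding hm_def using h by measurable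
  have hpi: "\<forall>a. integrable (K a) (\<lambda>r. hp (a, r))" unfolding hp_def using hi by (auto intro: integrable_max)
  have hmi: "\<forall>a. integrable (K a) (\<lambda>r. hm (a, r))" unfolding hm_def using hi by (auto intro: integrable_max)
  have Ip: "integrable (cond_law p K) hp" by (rule integrable_cond_law[OF K hpM hpi])
  have Im: "integrable (cond_law p K) hm" by (rule integrable_cond_law[OF K hmM hmi])
  have "(\<integral>x. h x \<partial>cond_law p K) = (\<integral>x. hp x - hm x \<partial>cond_law p K)" by (simp add: hpm[symmetric])
  also have "\<dots> = (\<integral>x. hp x \<partial>cond_law p K) - (\<integral>x. hm x \<partial>cond_law p K)" by (rule Bochner_Integration.integral_diff[OF Ip Im])
  also have "\<dots> = (\<Sum>a\<in>UNIV. pmf p a * (\<integral>r. hp (a, r) \<partial>K a)) - (\<Sum>a\<in>UNIV. pmf p a * (\<integral>r. hm (a, r) \<partial>K a))"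
    using integral_cond_law_nonneg[OF K hpM hpi] integral_cond_law_nonneg[OF K hmM hmi]
    unfolding hp_def hm_def by simp
  also have "\<dots> = (\<Sum>a\<in>UNIV. pmf p a * ((\<integral>r. hp (a, r) \<partial>K a) - (\<integral>r. hm (a, r) \<partial>K a)))"
    by (simp add: sum_subtractf right_diff_distrib)
  also have "\<dots> = (\<Sum>a\<in>UNIV. pmf p a * (\<integral>r. h (a, r) \<partial>K a))"
  proof (rule sum.cong[OF refl])
    fix a
    have "(\<integral>r. hp (a, r) \<partial>K a) - (\<integral>r. hm (a, r) \<partial>K a) = (\<integral>r. hp (a, r) - hm (a, r) \<partial>K a)"
      using hpi hmi by (simp add: Bochner_Integration.integral_diff)
    then show "pmf p a * ((\<integral>r. hp (a, r) \<partial>K a) - (\<integral>r. hm (a, r) \<partial>K a)) = pmf p a * (\<integral>r. h (a, r) \<partial>K a)"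
      by (simp add: hpm[symmetric])
  qed
  finally show ?thesis .
qed

lemma int_poly:
  assumes P: "prob_space M" and S: "sets M = sets (borel::real measure)" and I2: "integrable M (\<lambda>r. r\<^sup>2)"
  shows "integrable M (\<lambda>r. x * r\<^sup>2 + y * r + z)"
    and "(\<integral>r. x * r\<^sup>2 + y * r + z \<partial>M) = x * (\<integral>r. r\<^sup>2 \<partial>M) + y * (\<integral>r. r \<partial>M) + z"
proof -
  interpret prob_space M by (rule P)
  have mid: "(\<lambda>r::real. r) \<in> borel_measurable M" unfolding measurable_cong_sets[OF S refl] by simp
  have I1: "integrable M (\<lambda>r. r)"
    by (rule square_integrable_imp_integrable[OF mid]) (simp add: I2)
  show "integrable M (\<lambda>r. x * r\<^sup>2 + y * r + z)" using I1 I2 by simp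
  show "(\<integral>r. x * r\<^sup>2 + y * r + z \<partial>M) = x * (\<integral>r. r\<^sup>2 \<partial>M) + y * (\<integral>r. r \<partial>M) + z"
    using I1 I2 by (simp add: prob_space)
qed

definition mom1 :: "('d \<Rightarrow> real measure) \<Rightarrow> 'd \<Rightarrow> real" where "mom1 K a = (\<integral>r. r \<partial>K a)"
definition mom2 :: "('d \<Rightarrow> real measure) \<Rightarrow> 'd \<Rightarrow> real" where "mom2 K a = (\<integral>r. r\<^sup>2 \<partial>K a)"

lemma integral_cond_law_poly:
  fixes K :: "'d::finite \<Rightarrow> real measure"
  assumes K: "\<forall>a. prob_space (K a) \<and> sets (K a) = sets borel \<and> integrable (K a) (\<lambda>r. r\<^sup>2)"
  shows "integrable (cond_law p K) (\<lambda>(a, r). x a * r\<^sup>2 + y a * r + z a)"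
    and "(\<integral>(a, r). x a * r\<^sup>2 + y a * r + z a \<partial>cond_law p K) = (\<Sum>a\<in>UNIV. pmf p a * (x a * mom2 K a + y a * mom1 K a + z a))"
proof -
  have K': "\<forall>a. prob_space (K a) \<and> sets (K a) = sets borel" using K by blast
  have hm: "(\<lambda>(a, r). x a * r\<^sup>2 + y a * r + z a) \<in> borel_measurable (count_space UNIV \<Otimes>\<^sub>M (borel::real measure))"
    by measurable
  have hi: "\<forall>a. integrable (K a) (\<lambda>r. (\<lambda>(a, r). x a * r\<^sup>2 + y a * r + z a) (a, r))"
    using K int_poly(1) by simp
  show "integrable (cond_law p K) (\<lambda>(a, r). x a * r\<^sup>2 + y a * r + z a)"
    by (rule integrable_cond_law[OF K' hm hi])
  show "(\<integral>(a, r). x a * r\<^sup>2 + y a * r + z a \<partial>cond_law p K) = (\<Sum>a\<in>UNIV. pmf p a * (x a * mom2 K a + y a * mom1 K a + z a))"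
    using integral_cond_law[OF K' hm hi] K int_poly(2) unfolding mom1_def mom2_def by simp
qed

lemma lin_eq: "(\<lambda>(a, r). r * (u a::real)) = (\<lambda>(a, r). (\<lambda>a. 0) a * r\<^sup>2 + u a * r + (\<lambda>a. 0) a)"
  by (auto simp: fun_eq_iff mult.commute)

lemma sq_eq: "(\<lambda>x. ((\<lambda>(a, r). r * (u a::real)) x)\<^sup>2) = (\<lambda>(a, r). (\<lambda>a. (u a)\<^sup>2) a * r\<^sup>2 + (\<lambda>a. 0) a * r + (\<lambda>a. 0) a)"
  by (auto simp: fun_eq_iff power2_eq_square)

lemma sum_pmf_UNIV: "(\<Sum>a\<in>(UNIV::'d::finite set). pmf p a) = 1"
  using sum_pmf_eq_1[of UNIV p] by simp

lemma lin_integrable: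
  fixes K :: "'d::finite \<Rightarrow> real measure"
  assumes K: "\<forall>a. prob_space (K a) \<and> sets (K a) = sets borel \<and> integrable (K a) (\<lambda>r. r\<^sup>2)"
  shows "integrable (cond_law p K) (\<lambda>(a, r). r * u a)"
    and "integrable (cond_law p K) (\<lambda>x. ((\<lambda>(a, r). r * u a) x)\<^sup>2)"
proof -
  show "integrable (cond_law p K) (\<lambda>(a, r). r * u a)"
    unfolding lin_eq by (rule integral_cond_law_poly(1)[OF K])
  show "integrable (cond_law p K) (\<lambda>x. ((\<lambda>(a, r). r * u a) x)\<^sup>2)"
    unfolding sq_eq by (rule integral_cond_law_poly(1)[OF K])
qed

lemma expect_lin:
  fixes K :: "'d::finite \<Rightarrow> real measure"
  assumes K: "\<forall>a. prob_space (K a) \<and> sets (K a) = sets borel \<and> integrable (K a) (\<lambda>r. r\<^sup>2)"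
  shows "expect (cond_law p K) (\<lambda>(a, r). r * u a) = (\<Sum>a\<in>UNIV. pmf p a * (u a * mom1 K a))"
  unfolding expect_def lin_eq integral_cond_law_poly(2)[OF K] by simp

lemma covar_lin:
  fixes K :: "'d::finite \<Rightarrow> real measure"
  assumes K: "\<forall>a. prob_space (K a) \<and> sets (K a) = sets borel \<and> integrable (K a) (\<lambda>r. r\<^sup>2)"
  shows "covar (cond_law p K) (\<lambda>(a, r). r * u a) (\<lambda>(a, r). r * v a) =
    (\<Sum>a\<in>UNIV. pmf p a * (u a * v a * mom2 K a)) - (\<Sum>a\<in>UNIV. pmf p a * (u a * mom1 K a)) * (\<Sum>a\<in>UNIV. pmf p a * (v a * mom1 K a))"
proof -
  define \<alpha> where "\<alpha> = (\<Sum>a\<in>UNIV. pmf p a * (u a * mom1 K a))"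
  define \<beta> where "\<beta> = (\<Sum>a\<in>UNIV. pmf p a * (v a * mom1 K a))"
  have eq: "(\<lambda>\<omega>. ((\<lambda>(a, r). r * u a) \<omega> - \<alpha>) * ((\<lambda>(a, r). r * v a) \<omega> - \<beta>)) =
     (\<lambda>(a, r). (\<lambda>a. u a * v a) a * r\<^sup>2 + (\<lambda>a. - (u a * \<beta> + v a * \<alpha>)) a * r + (\<lambda>a. \<alpha> * \<beta>) a)"
    by (auto simp: fun_eq_iff algebra_simps power2_eq_square)
  have "covar (cond_law p K) (\<lambda>(a, r). r * u a) (\<lambda>(a, r). r * v a) =
     (\<Sum>a\<in>UNIV. pmf p a * (u a * v a * mom2 K a + (- (u a * \<beta> + v a * \<alpha>)) * mom1 K a + \<alpha> * \<beta>))"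
    unfolding covar_def expect_lin[OF K] \<alpha>_def[symmetric] \<beta>_def[symmetric]
    unfolding expect_def eq integral_cond_law_poly(2)[OF K] by simp
  also have "\<dots> = (\<Sum>a\<in>UNIV. pmf p a * (u a * v a * mom2 K a)) - \<beta> * (\<Sum>a\<in>UNIV. pmf p a * (u a * mom1 K a)) - \<alpha> * (\<Sum>a\<in>UNIV. pmf p a * (v a * mom1 K a)) + \<alpha> * \<beta> * (\<Sum>a\<in>UNIV. pmf p a)"
    by (simp add: algebra_simps sum.distrib sum_distrib_left sum_subtractf sum_negf)
  also have "\<dots> = (\<Sum>a\<in>UNIV. pmf p a * (u a * v a * mom2 K a)) - \<beta> * \<alpha> - \<alpha> * \<beta> + \<alpha> * \<beta> * (\<Sum>a\<in>UNIV. pmf p a)"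
    unfolding \<alpha>_def \<beta>_def by simp
  also have "\<dots> = (\<Sum>a\<in>UNIV. pmf p a * (u a * v a * mom2 K a)) - \<alpha> * \<beta>"
    by (simp add: sum_pmf_UNIV)
  finally show ?thesis unfolding \<alpha>_def \<beta>_def .
qed

lemma var_covar: "var M X = covar M X X"
  unfolding var_def covar_def by (simp add: power2_eq_square)

lemma ips_cov_entry:
  fixes K :: "'d::finite \<Rightarrow> real measure"
  assumes K: "\<forall>a. prob_space (K a) \<and> sets (K a) = sets borel \<and> integrable (K a) (\<lambda>r. r\<^sup>2)"
    and pos: "\<forall>a. pmf p a > 0"
  shows "ips_cov p K $ j $ k = (if j = k then mom2 K j / pmf p j else 0) - mom1 K j * mom1 K k"
proof -
  define e where "e = (\<lambda>j a. (if a = j then 1 else 0) / pmf p j)"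
  have feq: "(\<lambda>(a, r). r * (if a = j then 1 else 0) / pmf p j) = (\<lambda>(a, r). r * e j a)" for j
    unfolding e_def by (auto simp: fun_eq_iff)
  have "ips_cov p K $ j $ k = covar (cond_law p K) (\<lambda>(a, r). r * e j a) (\<lambda>(a, r). r * e k a)"
    unfolding ips_cov_def feq by simp
  also have "\<dots> = (\<Sum>a\<in>UNIV. pmf p a * (e j a * e k a * mom2 K a)) - (\<Sum>a\<in>UNIV. pmf p a * (e j a * mom1 K a)) * (\<Sum>a\<in>UNIV. pmf p a * (e k a * mom1 K a))"
    by (rule covar_lin[OF K])
  also have "(\<Sum>a\<in>UNIV. pmf p a * (e j a * e k a * mom2 K a)) = (if j = k then mom2 K j / pmf p j else 0)"
  proof -
    have "(\<Sum>a\<in>UNIV. pmf p a * (e j a * e k a * mom2 K a)) = (\<Sum>a\<in>UNIV. if a = j then pmf p j * (e j j * e k j * mom2 K j) else 0)"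
      by (rule sum.cong) (auto simp: e_def)
    also have "\<dots> = pmf p j * (e j j * e k j * mom2 K j)" by simp
    also have "\<dots> = (if j = k then mom2 K j / pmf p j else 0)"
      using pos[rule_format, of j] by (auto simp: e_def power2_eq_square field_simps)
    finally show ?thesis .
  qed
  moreover have m1: "(\<Sum>a\<in>UNIV. pmf p a * (e i a * mom1 K a)) = mom1 K i" for i
  proof -
    have "(\<Sum>a\<in>UNIV. pmf p a * (e i a * mom1 K a)) = (\<Sum>a\<in>UNIV. if a = i then pmf p i * (e i i * mom1 K i) else 0)"
      by (rule sum.cong) (auto simp: e_def)
    also have "\<dots> = mom1 K i" using pos[rule_format, of i] by (simp add: e_def)
    finally show ?thesis .
  qed
  ultimately show ?thesis by simp
qed

lemma one_hot_inner: "one_hot a \<bullet> (x::real^'d::finite) = x $ a"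
proof -
  have "one_hot a \<bullet> x = (\<Sum>i\<in>UNIV. (if i = a then x $ i else 0))"
    unfolding one_hot_def inner_vec_def by (rule sum.cong) auto
  then show ?thesis by simp
qed

lemma var_vec:
  fixes K :: "'d::finite \<Rightarrow> real measure"
  assumes K: "\<forall>a. prob_space (K a) \<and> sets (K a) = sets borel \<and> integrable (K a) (\<lambda>r. r\<^sup>2)"
    and pos: "\<forall>a. pmf p a > 0"
  shows "var (cond_law p K) (\<lambda>(a, r). r * (c $ a / pmf p a)) = c \<bullet> (ips_cov p K *v c)"
proof -
  have "var (cond_law p K) (\<lambda>(a, r). r * (c $ a / pmf p a)) =
     (\<Sum>a\<in>UNIV. pmf p a * (c $ a / pmf p a * (c $ a / pmf p a) * mom2 K a)) - (\<Sum>a\<in>UNIV. pmf p a * (c $ a / pmf p a * mom1 K a)) * (\<Sum>a\<in>UNIV. pmf p a * (c $ a / pmf p a * mom1 K a))"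
    unfolding var_covar by (rule covar_lin[OF K])
  also have "\<dots> = (\<Sum>a\<in>UNIV. c $ a * c $ a * mom2 K a / pmf p a) - (\<Sum>a\<in>UNIV. c $ a * mom1 K a) * (\<Sum>a\<in>UNIV. c $ a * mom1 K a)"
  proof -
    have "pmf p a * (c $ a / pmf p a * (c $ a / pmf p a) * mom2 K a) = c $ a * c $ a * mom2 K a / pmf p a" for a
      using pos[rule_format, of a] by (simp add: field_simps power2_eq_square)
    moreover have "pmf p a * (c $ a / pmf p a * mom1 K a) = c $ a * mom1 K a" for a
      using pos[rule_format, of a] by (simp add: field_simps)
    ultimately show ?thesis by simp
  qed
  also have "\<dots> = c \<bullet> (ips_cov p K *v c)"
  proof -
    have "c \<bullet> (ips_cov p K *v c) = (\<Sum>j\<in>UNIV. c $ j * (\<Sum>k\<in>UNIV. ((if j = k then mom2 K j / pmf p j else 0) - mom1 K j * mom1 K k) * c $ k))"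
      unfolding inner_vec_def matrix_vector_mult_def using ips_cov_entry[OF K pos] by simp
    also have "\<dots> = (\<Sum>j\<in>UNIV. c $ j * c $ j * mom2 K j / pmf p j - (c $ j * mom1 K j) * (\<Sum>k\<in>UNIV. c $ k * mom1 K k))"
    proof (rule sum.cong[OF refl])
      fix j
      have "(\<Sum>k\<in>UNIV. ((if j = k then mom2 K j / pmf p j else 0) - mom1 K j * mom1 K k) * c $ k)
          = (\<Sum>k\<in>UNIV. (if j = k then mom2 K j / pmf p j * c $ k else 0)) - (\<Sum>k\<in>UNIV. mom1 K j * mom1 K k * c $ k)"
      proof -
        have "((if j = k then mom2 K j / pmf p j else 0) - mom1 K j * mom1 K k) * c $ k =
            (if j = k then mom2 K j / pmf p j * c $ k else 0) - mom1 K j * mom1 K k * c $ k" for k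
          by (simp add: left_diff_distrib)
        then show ?thesis by (simp add: sum_subtractf)
      qed
      also have "\<dots> = mom2 K j / pmf p j * c $ j - mom1 K j * (\<Sum>k\<in>UNIV. c $ k * mom1 K k)"
        by (simp add: sum_distrib_left mult.commute mult.left_commute)
      finally have eqS: "(\<Sum>k\<in>UNIV. ((if j = k then mom2 K j / pmf p j else 0) - mom1 K j * mom1 K k) * c $ k) = mom2 K j / pmf p j * c $ j - mom1 K j * (\<Sum>k\<in>UNIV. c $ k * mom1 K k)" .
      show "c $ j * (\<Sum>k\<in>UNIV. ((if j = k then mom2 K j / pmf p j else 0) - mom1 K j * mom1 K k) * c $ k) =
          c $ j * c $ j * mom2 K j / pmf p j - (c $ j * mom1 K j) * (\<Sum>k\<in>UNIV. c $ k * mom1 K k)"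
        unfolding eqS by (simp add: right_diff_distrib mult.commute mult.left_commute)
    qed
    also have "\<dots> = (\<Sum>a\<in>UNIV. c $ a * c $ a * mom2 K a / pmf p a) - (\<Sum>a\<in>UNIV. c $ a * mom1 K a) * (\<Sum>a\<in>UNIV. c $ a * mom1 K a)"
      by (simp add: sum_subtractf sum_distrib_right)
    finally show ?thesis by simp
  qed
  finally show ?thesis .
qed

lemma prod_two:
  assumes "finite S" "i \<in> S" "j \<in> S" "i \<noteq> j"
  shows "(\<Prod>k\<in>S. if k = i then a k else if k = j then b k else (1::real)) = a i * b j"
proof -
  have "(\<Prod>k\<in>S. if k = i then a k else if k = j then b k else (1::real)) =
      a i * (\<Prod>k\<in>S - {i}. if k = i then a k else if k = j then b k else 1)"
    using assms by (subst prod.remove[of S i]) auto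
  also have "(\<Prod>k\<in>S - {i}. if k = i then a k else if k = j then b k else (1::real)) = (\<Prod>k\<in>S - {i}. if k = j then b k else 1)"
    by (rule prod.cong) auto
  also have "\<dots> = b j" using assms by simp
  finally show ?thesis .
qed

lemma var_sum_indep:
  fixes M :: "nat \<Rightarrow> 'a measure" and G :: "nat \<Rightarrow> 'a \<Rightarrow> real"
  assumes Pr: "\<And>i. prob_space (M i)"
    and I1: "\<And>i. i < n \<Longrightarrow> integrable (M i) (G i)"
    and I2: "\<And>i. i < n \<Longrightarrow> integrable (M i) (\<lambda>x. (G i x)\<^sup>2)"
  shows "var (PiM {..<n} M) (\<lambda>\<omega>. c * (\<Sum>i<n. G i (\<omega> i))) = c\<^sup>2 * (\<Sum>i<n. var (M i) (G i))"
proof -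
  interpret product_prob_space M "{..<n}"
    by (simp add: product_prob_space_def product_prob_space_axioms_def product_sigma_finite_def Pr
        prob_space_imp_sigma_finite)
  define PP where "PP = PiM {..<n} M"
  have c1: "integrable (M k) (\<lambda>x. 1::real)" for k
  proof -
    interpret Mk: prob_space "M k" by (rule Pr)
    show ?thesis by simp
  qed
  have one: "integrable PP (\<lambda>\<omega>. f (\<omega> i)) \<and> (\<integral>\<omega>. f (\<omega> i) \<partial>PP) = (\<integral>x. f x \<partial>M i)"
    if i: "i < n" and f: "integrable (M i) f" for i and f :: "'a \<Rightarrow> real"
  proof -
    define F where "F = (\<lambda>k x. if k = i then f x else (1::real))"
    have FI: "\<And>k. k \<in> {..<n} \<Longrightarrow> integrable (M k) (F k)"
      unfolding F_def using f c1 by (case_tac "k = i") auto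
    have eq: "(\<lambda>\<omega>. \<Prod>k\<in>{..<n}. F k (\<omega> k)) = (\<lambda>\<omega>. f (\<omega> i))"
      unfolding F_def using i by (simp add: fun_eq_iff)
    have "integrable PP (\<lambda>\<omega>. \<Prod>k\<in>{..<n}. F k (\<omega> k))"
      unfolding PP_def by (rule product_integrable_prod) (use FI in auto)
    moreover have "(\<integral>\<omega>. (\<Prod>k\<in>{..<n}. F k (\<omega> k)) \<partial>PP) = (\<Prod>k\<in>{..<n}. integral\<^sup>L (M k) (F k))"
      unfolding PP_def by (rule product_integral_prod) (use FI in auto)
    moreover have "(\<Prod>k\<in>{..<n}. integral\<^sup>L (M k) (F k)) = (\<integral>x. f x \<partial>M i)"
    proof -
      have "(\<Prod>k\<in>{..<n}. integral\<^sup>L (M k) (F k)) = (\<Prod>k\<in>{..<n}. if k = i then (\<integral>x. f x \<partial>M i) else 1)"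
      proof (rule prod.cong[OF refl])
        fix k
        interpret Mk: prob_space "M k" by (rule Pr)
        show "integral\<^sup>L (M k) (F k) = (if k = i then (\<integral>x. f x \<partial>M i) else 1)"
          unfolding F_def by (auto simp: prob_space.prob_space[OF Pr])
      qed
      then show ?thesis using i by simp
    qed
    ultimately show ?thesis using eq by simp
  qed
  have two: "integrable PP (\<lambda>\<omega>. f (\<omega> i) * g (\<omega> j)) \<and> (\<integral>\<omega>. f (\<omega> i) * g (\<omega> j) \<partial>PP) = (\<integral>x. f x \<partial>M i) * (\<integral>x. g x \<partial>M j)"
    if i: "i < n" and j: "j < n" and ij: "i \<noteq> j" and f: "integrable (M i) f" and g: "integrable (M j) g" for i j and f g :: "'a \<Rightarrow> real"
  proof -
    define F where "F = (\<lambda>k x. if k = i then f x else if k = j then g x else (1::real))"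
    have FI: "\<And>k. k \<in> {..<n} \<Longrightarrow> integrable (M k) (F k)"
      unfolding F_def using f g c1 by (case_tac "k = i"; case_tac "k = j") auto
    have eq: "(\<lambda>\<omega>. \<Prod>k\<in>{..<n}. F k (\<omega> k)) = (\<lambda>\<omega>. f (\<omega> i) * g (\<omega> j))"
      unfolding F_def using i j ij by (simp add: fun_eq_iff prod_two)
    have "integrable PP (\<lambda>\<omega>. \<Prod>k\<in>{..<n}. F k (\<omega> k))"
      unfolding PP_def by (rule product_integrable_prod) (use FI in auto)
    moreover have "(\<integral>\<omega>. (\<Prod>k\<in>{..<n}. F k (\<omega> k)) \<partial>PP) = (\<Prod>k\<in>{..<n}. integral\<^sup>L (M k) (F k))"
      unfolding PP_def by (rule product_integral_prod) (use FI in auto)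
    moreover have "(\<Prod>k\<in>{..<n}. integral\<^sup>L (M k) (F k)) = (\<integral>x. f x \<partial>M i) * (\<integral>x. g x \<partial>M j)"
    proof -
      have "(\<Prod>k\<in>{..<n}. integral\<^sup>L (M k) (F k)) = (\<Prod>k\<in>{..<n}. if k = i then (\<integral>x. f x \<partial>M i) else if k = j then (\<integral>x. g x \<partial>M j) else 1)"
      proof (rule prod.cong[OF refl])
        fix k
        interpret Mk: prob_space "M k" by (rule Pr)
        show "integral\<^sup>L (M k) (F k) = (if k = i then (\<integral>x. f x \<partial>M i) else if k = j then (\<integral>x. g x \<partial>M j) else 1)"
          unfolding F_def by (auto simp: prob_space.prob_space[OF Pr])
      qed
      also have "\<dots> = (\<integral>x. f x \<partial>M i) * (\<integral>x. g x \<partial>M j)"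
        using i j ij by (intro prod_two) auto
      finally show ?thesis .
    qed
    ultimately show ?thesis using eq by simp
  qed
  define \<mu> where "\<mu> = (\<lambda>i. \<integral>x. G i x \<partial>M i)"
  define H where "H = (\<lambda>i x. G i x - \<mu> i)"
  have HI: "integrable (M i) (H i)" if "i < n" for i
    unfolding H_def using I1[OF that] by simp
  have H2I: "integrable (M i) (\<lambda>x. H i x * H i x)" if "i < n" for i
  proof -
    have "(\<lambda>x. H i x * H i x) = (\<lambda>x. (G i x)\<^sup>2 - 2 * \<mu> i * G i x + (\<mu> i)\<^sup>2)"
      unfolding H_def by (simp add: fun_eq_iff power2_eq_square algebra_simps)
    then show ?thesis using I1[OF that] I2[OF that] by simp
  qed
  have H0: "(\<integral>x. H i x \<partial>M i) = 0" if "i < n" for i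
  proof -
    interpret Mi: prob_space "M i" by (rule Pr)
    show ?thesis unfolding H_def \<mu>_def using I1[OF that] by (simp add: prob_space.prob_space[OF Pr])
  qed
  have EV: "expect PP (\<lambda>\<omega>. c * (\<Sum>i<n. G i (\<omega> i))) = c * (\<Sum>i<n. \<mu> i)"
  proof -
    have "(\<integral>\<omega>. (\<Sum>i<n. G i (\<omega> i)) \<partial>PP) = (\<Sum>i<n. \<integral>\<omega>. G i (\<omega> i) \<partial>PP)"
      by (rule Bochner_Integration.integral_sum) (use one I1 in auto)
    also have "\<dots> = (\<Sum>i<n. \<mu> i)" unfolding \<mu>_def using one I1 by simp
    finally show ?thesis unfolding expect_def by simp
  qed
  have dev: "c * (\<Sum>i<n. G i (\<omega> i)) - c * (\<Sum>i<n. \<mu> i) = c * (\<Sum>i<n. H i (\<omega> i))" for \<omega>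
    unfolding H_def by (simp add: sum_subtractf right_diff_distrib)
  have sq: "(c * (\<Sum>i<n. H i (\<omega> i)))\<^sup>2 = c\<^sup>2 * (\<Sum>i<n. \<Sum>j<n. H i (\<omega> i) * H j (\<omega> j))" for \<omega>
    by (simp add: power2_eq_square power_mult_distrib sum_product algebra_simps)
  have cross: "integrable PP (\<lambda>\<omega>. H i (\<omega> i) * H j (\<omega> j)) \<and>
      (\<integral>\<omega>. H i (\<omega> i) * H j (\<omega> j) \<partial>PP) = (if i = j then var (M i) (G i) else 0)"
    if i: "i < n" and j: "j < n" for i j
  proof (cases "i = j")
    case True
    have "var (M i) (G i) = (\<integral>x. H i x * H i x \<partial>M i)"
      unfolding var_def expect_def H_def \<mu>_def by (simp add: power2_eq_square)
    then show ?thesis using True one[OF i H2I[OF i]] by simp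
  next
    case False
    then show ?thesis using two[OF i j False HI[OF i] HI[OF j]] H0[OF i] by simp
  qed
  have "var PP (\<lambda>\<omega>. c * (\<Sum>i<n. G i (\<omega> i))) = expect PP (\<lambda>\<omega>. (c * (\<Sum>i<n. G i (\<omega> i)) - c * (\<Sum>i<n. \<mu> i))\<^sup>2)"
    unfolding var_def EV ..
  also have "\<dots> = (\<integral>\<omega>. c\<^sup>2 * (\<Sum>i<n. \<Sum>j<n. H i (\<omega> i) * H j (\<omega> j)) \<partial>PP)"
    unfolding expect_def dev sq ..
  also have "\<dots> = c\<^sup>2 * (\<Sum>i<n. \<Sum>j<n. \<integral>\<omega>. H i (\<omega> i) * H j (\<omega> j) \<partial>PP)"
  proof -
    have "(\<integral>\<omega>. (\<Sum>i<n. \<Sum>j<n. H i (\<omega> i) * H j (\<omega> j)) \<partial>PP) = (\<Sum>i<n. \<integral>\<omega>. (\<Sum>j<n. H i (\<omega> i) * H j (\<omega> j)) \<partial>PP)"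
      by (rule Bochner_Integration.integral_sum) (use cross in auto)
    also have "\<dots> = (\<Sum>i<n. \<Sum>j<n. \<integral>\<omega>. H i (\<omega> i) * H j (\<omega> j) \<partial>PP)"
      by (rule sum.cong[OF refl], rule Bochner_Integration.integral_sum) (use cross in auto)
    finally show ?thesis by simp
  qed
  also have "\<dots> = c\<^sup>2 * (\<Sum>i<n. \<Sum>j<n. if i = j then var (M i) (G i) else 0)"
    using cross by simp
  also have "\<dots> = c\<^sup>2 * (\<Sum>i<n. var (M i) (G i))"
    by simp
  finally show ?thesis unfolding PP_def .
qed

lemma cond_number_cases: "cond_number M = \<infinity> \<or> (\<exists>x. cond_number M = ereal x)"
  unfolding cond_number_def by auto

lemma ips_cov_sym:
  fixes K :: "'d::finite \<Rightarrow> real measure"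
  assumes K: "\<forall>a. prob_space (K a) \<and> sets (K a) = sets borel \<and> integrable (K a) (\<lambda>r. r\<^sup>2)"
    and pos: "\<forall>a. pmf p a > 0"
  shows "transpose (ips_cov p K) = ips_cov p K"
  unfolding transpose_def by (simp add: vec_eq_iff ips_cov_entry[OF K pos] mult.commute)

lemma ips_cov_psd:
  fixes K :: "'d::finite \<Rightarrow> real measure"
  assumes K: "\<forall>a. prob_space (K a) \<and> sets (K a) = sets borel \<and> integrable (K a) (\<lambda>r. r\<^sup>2)"
    and pos: "\<forall>a. pmf p a > 0"
  shows "\<forall>c. c \<bullet> (ips_cov p K *v c) \<ge> 0"
proof
  fix c
  have "0 \<le> var (cond_law p K) (\<lambda>(a, r). r * (c $ a / pmf p a))"
    unfolding var_def expect_def by (rule Bochner_Integration.integral_nonneg) simp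
  then show "c \<bullet> (ips_cov p K *v c) \<ge> 0" using var_vec[OF K pos] by simp
qed

theorem proposition3:
  fixes \<X> :: "(real^'p) set"
    and act :: "'d::finite \<Rightarrow> real"
    and f :: "real \<Rightarrow> real^'c::finite"
    and D :: "real^'c^'d"
    and n :: nat
    and pit :: "nat \<Rightarrow> real^'p \<Rightarrow> 'd pmf"
    and Rk :: "real^'p \<Rightarrow> 'd \<Rightarrow> real measure"
    and W :: "nat \<Rightarrow> real^'p \<Rightarrow> real^'d^'d"
    and xs :: "nat \<Rightarrow> real^'p"
    and \<pi> :: "real^'p \<Rightarrow> 'd"
  assumes act_inj: "inj act"
    and f_const: "\<exists>c0. \<forall>a. f a $ c0 = 1"
    and D_def: "\<forall>k. D $ k = f (act k)"
    and D_rank: "rank D = CARD('c)"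
    and n_pos: "n \<ge> 1"
    and pit_pos: "\<forall>i<n. \<forall>x\<in>\<X>. \<forall>a. pmf (pit i x) a > 0"
    and Rk_prob: "\<forall>x\<in>\<X>. \<forall>a. prob_space (Rk x a) \<and> sets (Rk x a) = sets borel
                      \<and> integrable (Rk x a) (\<lambda>r. r\<^sup>2)"
    and W_sym: "\<forall>i<n. \<forall>x\<in>\<X>. transpose (W i x) = W i x"
    and W_pd: "\<forall>i<n. \<forall>x\<in>\<X>. \<forall>v. v \<noteq> 0 \<longrightarrow> v \<bullet> (W i x *v v) > 0"
    and xs_in: "\<forall>i<n. xs i \<in> \<X>"
  shows
    "let P = PiM {..<n} (\<lambda>i. cond_law (pit i (xs i)) (Rk (xs i)));
         V_IPS = (\<lambda>\<omega>. (1 / real n) * (\<Sum>i<n. snd (\<omega> i) *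
                    (if fst (\<omega> i) = \<pi> (xs i) then 1 else 0) / pmf (pit i (xs i)) (fst (\<omega> i))));
         V_K = (\<lambda>\<omega>. (1 / real n) * (\<Sum>i<n. snd (\<omega> i) *
                    (one_hot (fst (\<omega> i)) \<bullet> (K_mat (W i (xs i)) D *v one_hot (\<pi> (xs i))))
                    / pmf (pit i (xs i)) (fst (\<omega> i))));
         kmax = Max ((\<lambda>i. cond_number (W i (xs i) ** ips_cov (pit i (xs i)) (Rk (xs i)))) ` {..<n})
     in kmax = \<infinity> \<or> var P V_K \<le> real_of_ereal kmax * var P V_IPS"
proof -
  define Q where "Q = (\<lambda>i. cond_law (pit i (xs i)) (Rk (xs i)))"
  define Q' where "Q' = (\<lambda>i. if i < n then Q i else return (count_space UNIV) undefined)"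
  define P where "P = PiM {..<n} Q"
  have PQ': "P = PiM {..<n} Q'" unfolding P_def Q'_def by (rule PiM_cong) auto
  have Ki: "\<forall>a. prob_space (Rk (xs i) a) \<and> sets (Rk (xs i) a) = sets borel \<and> integrable (Rk (xs i) a) (\<lambda>r. r\<^sup>2)"
    if "i < n" for i using Rk_prob xs_in that by blast
  have posi: "\<forall>a. pmf (pit i (xs i)) a > 0" if "i < n" for i using pit_pos xs_in that by blast
  have Q'prob: "prob_space (Q' i)" for i
  proof (cases "i < n")
    case True
    then show ?thesis unfolding Q'_def Q_def using cond_law_prob[of "Rk (xs i)"] Ki[OF True] by simp
  next
    case False
    then show ?thesis unfolding Q'_def by (simp add: prob_space_return)
  qed
  define cI where "cI = (\<lambda>i. one_hot (\<pi> (xs i)))"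
  define cK where "cK = (\<lambda>i. K_mat (W i (xs i)) D *v one_hot (\<pi> (xs i)))"
  define Sg where "Sg = (\<lambda>i. ips_cov (pit i (xs i)) (Rk (xs i)))"
  define GI where "GI = (\<lambda>i. (\<lambda>(a, r). r * (cI i $ a / pmf (pit i (xs i)) a)))"
  define GK where "GK = (\<lambda>i. (\<lambda>(a, r). r * (cK i $ a / pmf (pit i (xs i)) a)))"
  define V_IPS where "V_IPS = (\<lambda>\<omega>. (1 / real n) * (\<Sum>i<n. snd (\<omega> i) *
                    (if fst (\<omega> i) = \<pi> (xs i) then 1 else 0) / pmf (pit i (xs i)) (fst (\<omega> i))))"
  define V_K where "V_K = (\<lambda>\<omega>. (1 / real n) * (\<Sum>i<n. snd (\<omega> i) *
                    (one_hot (fst (\<omega> i)) \<bullet> (K_mat (W i (xs i)) D *v one_hot (\<pi> (xs i))))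
                    / pmf (pit i (xs i)) (fst (\<omega> i))))"
  define kmax where "kmax = Max ((\<lambda>i. cond_number (W i (xs i) ** ips_cov (pit i (xs i)) (Rk (xs i)))) ` {..<n})"
  have VI: "V_IPS = (\<lambda>\<omega>. (1 / real n) * (\<Sum>i<n. GI i (\<omega> i)))"
    unfolding V_IPS_def GI_def cI_def by (simp add: fun_eq_iff case_prod_beta one_hot_def)
  have VK: "V_K = (\<lambda>\<omega>. (1 / real n) * (\<Sum>i<n. GK i (\<omega> i)))"
    unfolding V_K_def GK_def cK_def by (simp add: fun_eq_iff case_prod_beta one_hot_inner)
  have GIint: "integrable (Q' i) (GI i) \<and> integrable (Q' i) (\<lambda>x. (GI i x)\<^sup>2)" if "i < n" for i
  proof -
    have e: "Q' i = Q i" using that by (simp add: Q'_def)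
    show ?thesis unfolding e Q_def GI_def
      by (intro conjI lin_integrable[OF Ki[OF that]])
  qed
  have GKint: "integrable (Q' i) (GK i) \<and> integrable (Q' i) (\<lambda>x. (GK i x)\<^sup>2)" if "i < n" for i
  proof -
    have e: "Q' i = Q i" using that by (simp add: Q'_def)
    show ?thesis unfolding e Q_def GK_def
      by (intro conjI lin_integrable[OF Ki[OF that]])
  qed
  have varI: "var P V_IPS = (1 / real n)\<^sup>2 * (\<Sum>i<n. cI i \<bullet> (Sg i *v cI i))"
  proof -
    have "var P V_IPS = (1 / real n)\<^sup>2 * (\<Sum>i<n. var (Q' i) (GI i))"
      unfolding VI PQ' by (rule var_sum_indep) (use Q'prob GIint in auto)
    also have "(\<Sum>i<n. var (Q' i) (GI i)) = (\<Sum>i<n. cI i \<bullet> (Sg i *v cI i))"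
    proof (rule sum.cong[OF refl])
      fix i assume "i \<in> {..<n}"
      then have i: "i < n" by simp
      have e: "Q' i = Q i" using i by (simp add: Q'_def)
      show "var (Q' i) (GI i) = cI i \<bullet> (Sg i *v cI i)"
        unfolding e Q_def GI_def Sg_def by (rule var_vec[OF Ki[OF i] posi[OF i]])
    qed
    finally show ?thesis .
  qed
  have varK: "var P V_K = (1 / real n)\<^sup>2 * (\<Sum>i<n. cK i \<bullet> (Sg i *v cK i))"
  proof -
    have "var P V_K = (1 / real n)\<^sup>2 * (\<Sum>i<n. var (Q' i) (GK i))"
      unfolding VK PQ' by (rule var_sum_indep) (use Q'prob GKint in auto)
    also have "(\<Sum>i<n. var (Q' i) (GK i)) = (\<Sum>i<n. cK i \<bullet> (Sg i *v cK i))"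
    proof (rule sum.cong[OF refl])
      fix i assume "i \<in> {..<n}"
      then have i: "i < n" by simp
      have e: "Q' i = Q i" using i by (simp add: Q'_def)
      show "var (Q' i) (GK i) = cK i \<bullet> (Sg i *v cK i)"
        unfolding e Q_def GK_def Sg_def by (rule var_vec[OF Ki[OF i] posi[OF i]])
    qed
    finally show ?thesis .
  qed
  have main: "kmax = \<infinity> \<or> var P V_K \<le> real_of_ereal kmax * var P V_IPS"
  proof (cases "kmax = \<infinity>")
    case True then show ?thesis by simp
  next
    case False
    have fin: "finite ((\<lambda>i. cond_number (W i (xs i) ** Sg i)) ` {..<n})" by simp
    have kdef: "kmax = Max ((\<lambda>i. cond_number (W i (xs i) ** Sg i)) ` {..<n})"
      unfolding kmax_def Sg_def ..
    have le: "cond_number (W i (xs i) ** Sg i) \<le> kmax" if "i < n" for i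
      unfolding kdef using fin that by (intro Max_ge) auto
    have each: "cK i \<bullet> (Sg i *v cK i) \<le> real_of_ereal kmax * (cI i \<bullet> (Sg i *v cI i))" if i: "i < n" for i
    proof -
      have ninf: "cond_number (W i (xs i) ** Sg i) \<noteq> \<infinity>" using le[OF i] False by auto
      then obtain x where x: "cond_number (W i (xs i) ** Sg i) = ereal x" using cond_number_cases by blast
      then have "kmax \<noteq> -\<infinity>" using le[OF i] by auto
      with False obtain y where y: "kmax = ereal y" by (cases kmax) auto
      have xy: "x \<le> y" using le[OF i] x y by simp
      have Ssym: "transpose (Sg i) = Sg i" unfolding Sg_def by (rule ips_cov_sym[OF Ki[OF i] posi[OF i]])
      have Spsd: "\<forall>c. c \<bullet> (Sg i *v c) \<ge> 0" unfolding Sg_def by (rule ips_cov_psd[OF Ki[OF i] posi[OF i]])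
      have "cK i \<bullet> (Sg i *v cK i) \<le> real_of_ereal (cond_number (W i (xs i) ** Sg i)) * (cI i \<bullet> (Sg i *v cI i))"
        unfolding cK_def cI_def
        using la_main[OF _ _ Ssym Spsd D_rank ninf] W_sym W_pd xs_in i by blast
      also have "\<dots> \<le> real_of_ereal kmax * (cI i \<bullet> (Sg i *v cI i))"
        using x y xy Spsd by (simp add: mult_right_mono)
      finally show ?thesis .
    qed
    have "var P V_K \<le> (1 / real n)\<^sup>2 * (\<Sum>i<n. real_of_ereal kmax * (cI i \<bullet> (Sg i *v cI i)))"
      unfolding varK by (intro mult_left_mono sum_mono each) auto
    also have "\<dots> = real_of_ereal kmax * var P V_IPS"
      unfolding varI by (simp add: sum_distrib_left mult.left_commute)
    finally show ?thesis by simp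
  qed
  show ?thesis unfolding Let_def using main
    unfolding P_def Q_def V_IPS_def V_K_def kmax_def .
qed

end
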